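(* For any connected graphs $G$ and $H$, $$G_{SR}\boxtimes H_{SR}\sqsubseteq (G\boxtimes H)_{SR}\sqsubseteq G_{SR}\oplus H_{SR}.$$
   Context: All graphs are simple; $d_G$ is the shortest-path distance. A vertex $u$ is maximally distant from $v$ in $G$ if for every neighbor $w$ of $u$, $d_G(v,w)\le d_G(u,v)$; $u,v$ are mutually maximally distant if each is maximally distant from the other. The strong resolving graph $G_{SR}$ of $G$ has vertex set $V(G)$, with $u,v$ adjacent iff $u$ and $v$ are mutually maximally distant in $G$. The strong product $G\boxtimes H$ has vertex set $V(G)\times V(H)$, with $(a,b)\sim(c,d)$ iff ($a=c$ and $bd\in E(H)$) or ($ac\in E(G)$ and $b=d$) or ($ac\in E(G)$ and $bd\in E(H)$). The Cartesian sum $G\oplus H$ has vertex set $V(G)\times V(H)$, with $(a,b)\sim(c,d)$ iff $ac\in E(G)$ or $bd\in E(H)$. For graphs $G'=(V',E')$ and $G=(V,E)$, $G'\sqsubseteq G$ means $V'\subseteq V$ and $E'\subseteq E$. *)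

theory Defs
  imports Main
begin

type_synonym 'a graph = "'a set \<times> ('a \<times> 'a) set"

definition simple_graph :: "'a graph \<Rightarrow> bool" where
  "simple_graph G \<longleftrightarrow> snd G \<subseteq> fst G \<times> fst G \<and> sym (snd G) \<and> irrefl (snd G)"

definition connected_graph :: "'a graph \<Rightarrow> bool" where
  "connected_graph G \<longleftrightarrow> fst G \<noteq> {} \<and> (\<forall>u\<in>fst G. \<forall>v\<in>fst G. (u, v) \<in> (snd G)\<^sup>*)"

definition gdist :: "'a graph \<Rightarrow> 'a \<Rightarrow> 'a \<Rightarrow> nat" where
  "gdist G u v = (LEAST n. (u, v) \<in> (snd G) ^^ n)"

definition max_distant :: "'a graph \<Rightarrow> 'a \<Rightarrow> 'a \<Rightarrow> bool" where
  "max_distant G u v \<longleftrightarrow> (\<forall>w. (u, w) \<in> snd G \<longrightarrow> gdist G v w \<le> gdist G u v)"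

definition mutually_max_distant :: "'a graph \<Rightarrow> 'a \<Rightarrow> 'a \<Rightarrow> bool" where
  "mutually_max_distant G u v \<longleftrightarrow> max_distant G u v \<and> max_distant G v u"

definition strong_resolving_graph :: "'a graph \<Rightarrow> 'a graph" where
  "strong_resolving_graph G =
     (fst G, {(u, v). u \<in> fst G \<and> v \<in> fst G \<and> u \<noteq> v \<and> mutually_max_distant G u v})"

definition strong_product :: "'a graph \<Rightarrow> 'b graph \<Rightarrow> ('a \<times> 'b) graph" where
  "strong_product G H =
     (fst G \<times> fst H,
      {((a, b), (c, d)). (a, b) \<in> fst G \<times> fst H \<and> (c, d) \<in> fst G \<times> fst H \<and>
         ((a = c \<and> (b, d) \<in> snd H) \<or> ((a, c) \<in> snd G \<and> b = d) \<or>
          ((a, c) \<in> snd G \<and> (b, d) \<in> snd H))})"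

definition cartesian_sum :: "'a graph \<Rightarrow> 'b graph \<Rightarrow> ('a \<times> 'b) graph" where
  "cartesian_sum G H =
     (fst G \<times> fst H,
      {((a, b), (c, d)). (a, b) \<in> fst G \<times> fst H \<and> (c, d) \<in> fst G \<times> fst H \<and>
         ((a, c) \<in> snd G \<or> (b, d) \<in> snd H)})"

definition subgraph :: "'a graph \<Rightarrow> 'a graph \<Rightarrow> bool" where
  "subgraph G' G \<longleftrightarrow> fst G' \<subseteq> fst G \<and> snd G' \<subseteq> snd G"

end

theory Submission imports Defs begin

lemma relpow_sym: "sym E \<Longrightarrow> (a,b)\<in>E^^n \<Longrightarrow> (b,a)\<in>E^^n"
proof (induction n arbitrary: b)
  case 0 then show ?case by simp
next
  case (Suc n)
  from Suc.prems(2) obtain y where "(a,y)\<in>E^^n" "(y,b)\<in>E" by (rule relpow_Suc_E)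
  then have "(y,a)\<in>E^^n" "(b,y)\<in>E" using Suc by (auto dest: symD)
  then show ?case by (meson relpow_Suc_I2)
qed

lemma gdist_sym: "sym (snd G) \<Longrightarrow> gdist G a c = gdist G c a"
  unfolding gdist_def using relpow_sym by metis

lemma gd_le: "(a,c)\<in> snd G^^k \<Longrightarrow> k \<le> n \<Longrightarrow> gdist G a c \<le> n"
  unfolding gdist_def by (meson Least_le le_trans)

lemma gd_walk: "(a,c)\<in> snd G^^k \<Longrightarrow> (a,c) \<in> snd G^^(gdist G a c)"
  unfolding gdist_def by (rule LeastI)

lemma gd_zero: "gdist G a c = 0 \<Longrightarrow> (a,c)\<in> snd G^^k \<Longrightarrow> a = c"
  using gd_walk by fastforce

lemma gd_one: "(a,c)\<in> snd G \<Longrightarrow> gdist G a c \<le> 1"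
  by (rule gd_le[where k=1]) auto

lemma lazy_up: "E \<subseteq> V\<times>V \<Longrightarrow> a\<in>V \<Longrightarrow> (a,c)\<in>(E \<union> Id_on V)^^n \<Longrightarrow> c \<in> V"
  by (induction n arbitrary: c) (auto elim!: relpow_Suc_E)

lemma lazy1: "E \<subseteq> V\<times>V \<Longrightarrow> a\<in>V \<Longrightarrow> (a,c)\<in>(E \<union> Id_on V)^^n \<Longrightarrow> \<exists>k\<le>n. (a,c)\<in>E^^k"
proof (induction n arbitrary: c)
  case 0 then show ?case by auto
next
  case (Suc n)
  from Suc.prems(3) obtain y where y: "(a,y)\<in>(E \<union> Id_on V)^^n" "(y,c)\<in>E \<union> Id_on V" by (rule relpow_Suc_E)
  from Suc.IH[OF Suc.prems(1,2) y(1)] obtain k where k: "k\<le>n" "(a,y)\<in>E^^k" by blast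
  from y(2) show ?case
  proof
    assume "(y,c)\<in>E" then show ?thesis using k by (meson Suc_le_mono relpow_Suc_I)
  next
    assume "(y,c)\<in>Id_on V" then show ?thesis using k by (auto intro: le_SucI)
  qed
qed

lemma lazy_mono: "E \<subseteq> V\<times>V \<Longrightarrow> a\<in>V \<Longrightarrow> (a,c)\<in>(E \<union> Id_on V)^^n \<Longrightarrow> n \<le> m \<Longrightarrow> (a,c)\<in>(E \<union> Id_on V)^^m"
proof (induction m)
  case 0 then show ?case by simp
next
  case (Suc m)
  show ?case
  proof (cases "n = Suc m")
    case False
    then have "(a,c)\<in>(E \<union> Id_on V)^^m" using Suc by auto
    moreover have "c\<in>V" using lazy_up Suc.prems by metis
    ultimately show ?thesis by (auto intro: relpow_Suc_I)
  qed (use Suc in auto)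
qed

lemma relpow_mono_aux: "(R::('a\<times>'a) set) \<subseteq> S \<Longrightarrow> R^^k \<subseteq> S^^k"
  by (induction k) (simp_all add: relcomp_mono relpow.simps)

lemma lazy2: "E \<subseteq> V\<times>V \<Longrightarrow> a\<in>V \<Longrightarrow> (a,c)\<in>E^^k \<Longrightarrow> k\<le>n \<Longrightarrow> (a,c)\<in>(E \<union> Id_on V)^^n"
  apply (rule lazy_mono[where n=k], assumption+)
  using relpow_mono_aux[of E "E \<union> Id_on V" k] by auto

definition pr :: "('a\<times>'a) set \<Rightarrow> ('b\<times>'b) set \<Rightarrow> (('a\<times>'b)\<times>('a\<times>'b)) set" where
  "pr R S = {((a,b),(c,d)). (a,c)\<in>R \<and> (b,d)\<in>S}"

lemma pr_pow: "((a,b),(c,d))\<in>(pr R S)^^n \<longleftrightarrow> (a,c)\<in>R^^n \<and> (b,d)\<in>S^^n"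
proof (induction n arbitrary: c d)
  case 0 then show ?case by auto
next
  case (Suc n)
  show ?case
  proof
    assume "((a,b),(c,d))\<in>(pr R S)^^Suc n"
    then obtain y where "((a,b),y)\<in>(pr R S)^^n" "(y,(c,d))\<in>pr R S" by (rule relpow_Suc_E)
    then show "(a,c)\<in>R^^Suc n \<and> (b,d)\<in>S^^Suc n" using Suc.IH
      by (cases y) (auto simp: pr_def intro: relpow_Suc_I)
  next
    assume "(a,c)\<in>R^^Suc n \<and> (b,d)\<in>S^^Suc n"
    then obtain x y where "(a,x)\<in>R^^n" "(x,c)\<in>R" "(b,y)\<in>S^^n" "(y,d)\<in>S"
      by (meson relpow_Suc_E)
    then show "((a,b),(c,d))\<in>(pr R S)^^Suc n" using Suc.IH[of x y]
      by (auto simp: pr_def intro: relpow_Suc_I)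
  qed
qed

lemma sg_sub: "simple_graph G \<Longrightarrow> snd G \<subseteq> fst G \<times> fst G"
  by (simp add: simple_graph_def)

lemma sp_sub: "snd (strong_product G H) \<subseteq> fst (strong_product G H) \<times> fst (strong_product G H)"
  by (auto simp: strong_product_def)

lemma pr_eq: "simple_graph G \<Longrightarrow> simple_graph H \<Longrightarrow>
  pr (snd G \<union> Id_on (fst G)) (snd H \<union> Id_on (fst H)) = snd (strong_product G H) \<union> Id_on (fst (strong_product G H))"
  unfolding pr_def strong_product_def simple_graph_def by auto

lemma conn_walk: "connected_graph G \<Longrightarrow> a \<in> fst G \<Longrightarrow> c \<in> fst G \<Longrightarrow> \<exists>k. (a,c)\<in>snd G^^k"
  unfolding connected_graph_def using rtrancl_power by metis

lemma distP:
  assumes G: "simple_graph G" "connected_graph G" and H: "simple_graph H" "connected_graph H"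
    and v: "a\<in>fst G" "c\<in>fst G" "b\<in>fst H" "d\<in>fst H"
  shows "gdist (strong_product G H) (a,b) (c,d) = max (gdist G a c) (gdist H b d)"
proof -
  let ?P = "strong_product G H"
  let ?m = "max (gdist G a c) (gdist H b d)"
  have vP: "(a,b) \<in> fst ?P" using v by (simp add: strong_product_def)
  obtain k1 where k1: "(a,c)\<in>snd G^^k1" using conn_walk G v by metis
  obtain k2 where k2: "(b,d)\<in>snd H^^k2" using conn_walk H v by metis
  have "(a,c)\<in>(snd G \<union> Id_on (fst G))^^?m"
    using lazy2[OF sg_sub[OF G(1)] v(1) gd_walk[OF k1]] by simp
  moreover have "(b,d)\<in>(snd H \<union> Id_on (fst H))^^?m"
    using lazy2[OF sg_sub[OF H(1)] v(3) gd_walk[OF k2]] by simp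
  ultimately have "((a,b),(c,d))\<in>(snd ?P \<union> Id_on (fst ?P))^^?m"
    using pr_pow pr_eq[OF G(1) H(1)] by metis
  then obtain k where k: "k \<le> ?m" "((a,b),(c,d))\<in>snd ?P^^k"
    using lazy1[OF sp_sub vP] by blast
  have le1: "gdist ?P (a,b) (c,d) \<le> ?m" using gd_le[OF k(2,1)] .
  have "((a,b),(c,d))\<in>(snd ?P \<union> Id_on (fst ?P))^^(gdist ?P (a,b) (c,d))"
    using lazy2[OF sp_sub vP gd_walk[OF k(2)]] by simp
  then have "(a,c)\<in>(snd G \<union> Id_on (fst G))^^(gdist ?P (a,b) (c,d))"
     "(b,d)\<in>(snd H \<union> Id_on (fst H))^^(gdist ?P (a,b) (c,d))"
    using pr_pow pr_eq[OF G(1) H(1)] by metis+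
  then have "gdist G a c \<le> gdist ?P (a,b) (c,d)" "gdist H b d \<le> gdist ?P (a,b) (c,d)"
    using lazy1[OF sg_sub[OF G(1)] v(1)] lazy1[OF sg_sub[OF H(1)] v(3)] gd_le by metis+
  then show ?thesis using le1 by simp
qed

lemma gd_refl: "gdist G a a = 0"
  using gd_le[where a=a and c=a and G=G and k=0 and n=0] by simp

lemma maP:
  assumes G: "simple_graph G" "connected_graph G" and H: "simple_graph H" "connected_graph H"
    and v: "a\<in>fst G" "c\<in>fst G" "b\<in>fst H" "d\<in>fst H"
    and ne: "(a,b) \<noteq> (c,d)"
    and mg: "a = c \<or> max_distant G a c" and mh: "b = d \<or> max_distant H b d"
  shows "max_distant (strong_product G H) (a,b) (c,d)"
  unfolding max_distant_def
proof (intro allI impI)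
  fix w assume w: "((a,b),w) \<in> snd (strong_product G H)"
  obtain x y where xy: "w = (x,y)" by (cases w)
  have x: "x \<in> fst G" "x = a \<or> (a,x) \<in> snd G" and y: "y \<in> fst H" "y = b \<or> (b,y) \<in> snd H"
    using w xy by (auto simp: strong_product_def)
  have D: "gdist (strong_product G H) (a,b) (c,d) = max (gdist G a c) (gdist H b d)"
    using distP[OF G H v] .
  have D2: "gdist (strong_product G H) (c,d) w = max (gdist G c x) (gdist H d y)"
    unfolding xy by (rule distP[OF G H v(2) x(1) v(4) y(1)])
  have pos: "1 \<le> max (gdist G a c) (gdist H b d)"
  proof (rule ccontr)
    assume "\<not> ?thesis"
    then have "gdist G a c = 0" "gdist H b d = 0" by auto
    moreover obtain k1 where "(a,c)\<in>snd G^^k1" using conn_walk G v by metis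
    moreover obtain k2 where "(b,d)\<in>snd H^^k2" using conn_walk H v by metis
    ultimately show False using gd_zero ne by metis
  qed
  have "gdist G c x \<le> max (gdist G a c) (gdist H b d)"
  proof (cases "x = a")
    case True
    have "sym (snd G)" using G(1) by (simp add: simple_graph_def)
    then have "gdist G c a = gdist G a c" using gdist_sym by metis
    then show ?thesis using True by simp
  next
    case False
    then have ax: "(a,x) \<in> snd G" using x by auto
    show ?thesis
    proof (cases "a = c")
      case True then show ?thesis using gd_one[OF ax] pos by simp
    next
      case False then have "max_distant G a c" using mg by simp
      then have "gdist G c x \<le> gdist G a c" using ax unfolding max_distant_def by blast
      then show ?thesis by simp
    qed
  qed
  moreover have "gdist H d y \<le> max (gdist G a c) (gdist H b d)"
  proof (cases "y = b")
    case True
    have "sym (snd H)" using H(1) by (simp add: simple_graph_def)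
    then have "gdist H d b = gdist H b d" using gdist_sym by metis
    then show ?thesis using True by simp
  next
    case False
    then have ax: "(b,y) \<in> snd H" using y by auto
    show ?thesis
    proof (cases "b = d")
      case True then show ?thesis using gd_one[OF ax] pos by simp
    next
      case False then have "max_distant H b d" using mh by simp
      then have "gdist H d y \<le> gdist H b d" using ax unfolding max_distant_def by blast
      then show ?thesis by simp
    qed
  qed
  ultimately show "gdist (strong_product G H) (c,d) w \<le> gdist (strong_product G H) (a,b) (c,d)"
    using D D2 by simp
qed

lemma maG:
  assumes G: "simple_graph G" "connected_graph G" and H: "simple_graph H" "connected_graph H"
    and v: "a\<in>fst G" "c\<in>fst G" "b\<in>fst H" "d\<in>fst H"
    and le: "gdist H b d \<le> gdist G a c"
    and m: "max_distant (strong_product G H) (a,b) (c,d)"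
  shows "max_distant G a c"
  unfolding max_distant_def
proof (intro allI impI)
  fix x assume ax: "(a,x) \<in> snd G"
  then have x: "x \<in> fst G" using sg_sub[OF G(1)] by auto
  have "((a,b),(x,b)) \<in> snd (strong_product G H)" using ax v x by (auto simp: strong_product_def)
  then have "gdist (strong_product G H) (c,d) (x,b) \<le> gdist (strong_product G H) (a,b) (c,d)"
    using m unfolding max_distant_def by blast
  then show "gdist G c x \<le> gdist G a c"
    using distP[OF G H v] distP[OF G H v(2) x v(4,3)] le by simp
qed

lemma maH:
  assumes G: "simple_graph G" "connected_graph G" and H: "simple_graph H" "connected_graph H"
    and v: "a\<in>fst G" "c\<in>fst G" "b\<in>fst H" "d\<in>fst H"
    and le: "gdist G a c \<le> gdist H b d"
    and m: "max_distant (strong_product G H) (a,b) (c,d)"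
  shows "max_distant H b d"
  unfolding max_distant_def
proof (intro allI impI)
  fix y assume ay: "(b,y) \<in> snd H"
  then have y: "y \<in> fst H" using sg_sub[OF H(1)] by auto
  have "((a,b),(a,y)) \<in> snd (strong_product G H)" using ay v y by (auto simp: strong_product_def)
  then have "gdist (strong_product G H) (c,d) (a,y) \<le> gdist (strong_product G H) (a,b) (c,d)"
    using m unfolding max_distant_def by blast
  then show "gdist H d y \<le> gdist H b d"
    using distP[OF G H v] distP[OF G H v(2,1) v(4) y] le by simp
qed

lemma part1:
  assumes G: "simple_graph G" "connected_graph G" and H: "simple_graph H" "connected_graph H"
  shows "subgraph (strong_product (strong_resolving_graph G) (strong_resolving_graph H))
                  (strong_resolving_graph (strong_product G H))"
  unfolding subgraph_def
proof
  show "fst (strong_product (strong_resolving_graph G) (strong_resolving_graph H))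
    \<subseteq> fst (strong_resolving_graph (strong_product G H))"
    by (simp add: strong_product_def strong_resolving_graph_def)
  show "snd (strong_product (strong_resolving_graph G) (strong_resolving_graph H))
    \<subseteq> snd (strong_resolving_graph (strong_product G H))"
  proof
    fix e assume e: "e \<in> snd (strong_product (strong_resolving_graph G) (strong_resolving_graph H))"
    obtain a b c d where abcd: "e = ((a,b),(c,d))" by (metis prod.exhaust)
    have v: "a\<in>fst G" "c\<in>fst G" "b\<in>fst H" "d\<in>fst H"
      and disj: "(a = c \<and> b \<noteq> d \<and> mutually_max_distant H b d) \<or> (a \<noteq> c \<and> mutually_max_distant G a c \<and> b = d)
        \<or> (a \<noteq> c \<and> mutually_max_distant G a c \<and> b \<noteq> d \<and> mutually_max_distant H b d)"
      using e abcd by (auto simp: strong_product_def strong_resolving_graph_def)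
    have ne: "(a,b) \<noteq> (c,d)" using disj by auto
    have mg: "a = c \<or> max_distant G a c" "c = a \<or> max_distant G c a"
      using disj unfolding mutually_max_distant_def by auto
    have mh: "b = d \<or> max_distant H b d" "d = b \<or> max_distant H d b"
      using disj unfolding mutually_max_distant_def by auto
    have "max_distant (strong_product G H) (a,b) (c,d)"
      using maP[OF G H v ne mg(1) mh(1)] .
    moreover have "max_distant (strong_product G H) (c,d) (a,b)"
      using maP[OF G H v(2,1,4,3) _ mg(2) mh(2)] ne by metis
    ultimately show "e \<in> snd (strong_resolving_graph (strong_product G H))"
      using abcd v ne by (simp add: strong_resolving_graph_def strong_product_def mutually_max_distant_def)
  qed
qed

lemma part2:
  assumes G: "simple_graph G" "connected_graph G" and H: "simple_graph H" "connected_graph H"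
  shows "subgraph (strong_resolving_graph (strong_product G H))
                  (cartesian_sum (strong_resolving_graph G) (strong_resolving_graph H))"
  unfolding subgraph_def
proof
  show "fst (strong_resolving_graph (strong_product G H))
    \<subseteq> fst (cartesian_sum (strong_resolving_graph G) (strong_resolving_graph H))"
    by (simp add: cartesian_sum_def strong_product_def strong_resolving_graph_def)
  show "snd (strong_resolving_graph (strong_product G H))
    \<subseteq> snd (cartesian_sum (strong_resolving_graph G) (strong_resolving_graph H))"
  proof
    fix e assume e: "e \<in> snd (strong_resolving_graph (strong_product G H))"
    obtain a b c d where abcd: "e = ((a,b),(c,d))" by (metis prod.exhaust)
    have v: "a\<in>fst G" "c\<in>fst G" "b\<in>fst H" "d\<in>fst H"
      and ne: "(a,b) \<noteq> (c,d)"
      and m1: "max_distant (strong_product G H) (a,b) (c,d)"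
      and m2: "max_distant (strong_product G H) (c,d) (a,b)"
      using e abcd by (auto simp: strong_product_def strong_resolving_graph_def mutually_max_distant_def)
    have sG: "gdist G c a = gdist G a c" using G(1) gdist_sym by (metis simple_graph_def)
    have sH: "gdist H d b = gdist H b d" using H(1) gdist_sym by (metis simple_graph_def)
    obtain k1 where k1: "(a,c)\<in>snd G^^k1" using conn_walk G v by metis
    obtain k2 where k2: "(b,d)\<in>snd H^^k2" using conn_walk H v by metis
    have "(a \<noteq> c \<and> mutually_max_distant G a c) \<or> (b \<noteq> d \<and> mutually_max_distant H b d)"
    proof (cases "gdist H b d \<le> gdist G a c")
      case True
      have "a \<noteq> c"
      proof
        assume "a = c"
        then have "gdist H b d = 0" using True gd_refl[of G a] by simp
        then have "b = d" using gd_zero k2 by metis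
        then show False using ne \<open>a = c\<close> by simp
      qed
      moreover have "max_distant G a c" using maG[OF G H v True m1] .
      moreover have "max_distant G c a" using maG[OF G H v(2,1,4,3) _ m2] True sG sH by simp
      ultimately show ?thesis by (simp add: mutually_max_distant_def)
    next
      case False
      then have F: "gdist G a c \<le> gdist H b d" by simp
      have "b \<noteq> d"
      proof
        assume "b = d"
        then have "gdist G a c = 0" using F gd_refl[of H b] by simp
        then have "a = c" using gd_zero k1 by metis
        then show False using ne \<open>b = d\<close> by simp
      qed
      moreover have "max_distant H b d" using maH[OF G H v F m1] .
      moreover have "max_distant H d b" using maH[OF G H v(2,1,4,3) _ m2] F sG sH by simp
      ultimately show ?thesis by (simp add: mutually_max_distant_def)
    qed
    then show "e \<in> snd (cartesian_sum (strong_resolving_graph G) (strong_resolving_graph H))"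
      using abcd v by (auto simp: cartesian_sum_def strong_resolving_graph_def)
  qed
qed

theorem theorem7:
  fixes G :: "'a graph" and H :: "'b graph"
  assumes "simple_graph G" "finite (fst G)" "connected_graph G"
      and "simple_graph H" "finite (fst H)" "connected_graph H"
  shows "subgraph (strong_product (strong_resolving_graph G) (strong_resolving_graph H))
                  (strong_resolving_graph (strong_product G H))
       \<and> subgraph (strong_resolving_graph (strong_product G H))
                  (cartesian_sum (strong_resolving_graph G) (strong_resolving_graph H))"
  using part1[OF assms(1,3,4,6)] part2[OF assms(1,3,4,6)] by simp

end
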